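(* Let $V$ be a finite-dimensional complex vector space with a Hermitian inner product, $\mathbf G$ a finite group of unitary transformations of $V$, $\mathbf x_0\in V$ a unit vector with full orbit under $\mathbf G$, $\{I\}=\mathbf G_0<\cdots<\mathbf G_m=\mathbf G$ a subgroup sequence, and $\operatorname{CL}(\mathbf G_k/\mathbf G_{k-1})$ ($1\le k\le m$) coset leader sets. If for every $k$ with $1\le k<m$ every induced coset leader in $\operatorname{CL}(\mathbf G/\mathbf G_k)$ is minimal, then the subgroup decoding algorithm decodes correctly with some noise.
   Context: Full orbit: $|\mathbf G\mathbf x_0|=|\mathbf G|$; then $\operatorname{Stab}_{\mathbf G}(\mathbf x_0)=\{I\}$. $\operatorname{CL}(\mathbf G_k/\mathbf G_{k-1})$ is a set of representatives of the left cosets of $\mathbf G_{k-1}$ in $\mathbf G_k$ containing $I$; induced coset leaders $\operatorname{CL}(\mathbf G_l/\mathbf G_k)=\{c_l\cdots c_{k+1}:c_i\in\operatorname{CL}(\mathbf G_i/\mathbf G_{i-1})\}$. Subgroup decoding algorithm: given $\mathbf r$, set $\mathbf r_0=\mathbf r$; for $k=1,\dots,m$ choose $d_k\in\operatorname{CL}(\mathbf G_k/\mathbf G_{k-1})$ minimizing $\|a\mathbf r_{k-1}-\mathbf x_0\|$ over $a\in\operatorname{CL}(\mathbf G_k/\mathbf G_{k-1})$ (ties broken by a fixed ordering), set $\mathbf r_k=d_k\mathbf r_{k-1}$; output $g'=d_m\cdots d_1$. It decodes correctly with some noise if there is $\delta>0$ such that for all $g\in\mathbf G$ and $\mathbf r$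 with $\|\mathbf r-g^{-1}\mathbf x_0\|<\delta$ the output is $g$. For a subgroup $H$, $\operatorname{FR}(H)=\{\mathbf x:\|\mathbf x-\mathbf x_0\|<\|h\mathbf x-\mathbf x_0\|\ \forall h\in H\setminus\operatorname{Stab}_H(\mathbf x_0)\}$. For $H\le K$, a coset representative $c$ of $H$ in $K$ is minimal if $\mathbf x_0\in c(\operatorname{FR}(H))$. *)

theory Defs
  imports "HOL-Analysis.Analysis"
begin

type_synonym 'n cmat = "complex ^ 'n ^ 'n"
type_synonym 'n cvec = "complex ^ 'n"

definition unitary_mat :: "'n::finite cmat \<Rightarrow> bool" where
  "unitary_mat U \<longleftrightarrow> (\<forall>x. norm (U *v x) = norm x)"

definition mat_group :: "'n::finite cmat set \<Rightarrow> bool" where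
  "mat_group G \<longleftrightarrow> mat 1 \<in> G \<and> (\<forall>g\<in>G. \<forall>h\<in>G. g ** h \<in> G)
     \<and> (\<forall>g\<in>G. \<exists>h\<in>G. h ** g = mat 1 \<and> g ** h = mat 1)"

definition mat_subgroup :: "'n::finite cmat set \<Rightarrow> 'n cmat set \<Rightarrow> bool" where
  "mat_subgroup H G \<longleftrightarrow> H \<subseteq> G \<and> mat_group H"

definition Stab :: "'n::finite cmat set \<Rightarrow> 'n cvec \<Rightarrow> 'n cmat set" where
  "Stab H x0 = {h \<in> H. h *v x0 = x0}"

definition coset_leaders :: "'n::finite cmat set \<Rightarrow> 'n cmat set \<Rightarrow> 'n cmat set \<Rightarrow> bool" where
  "coset_leaders C K H \<longleftrightarrow> C \<subseteq> K \<and> mat 1 \<in> C \<and>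
     (\<forall>g\<in>K. \<exists>!c. c \<in> C \<and> (\<exists>h\<in>H. g = c ** h))"

text \<open>Induced coset leaders CL(G_j/G_k) = {c_j ... c_(k+1)} (for j \<le> k this is {I}).\<close>
fun induced_CL :: "(nat \<Rightarrow> 'n::finite cmat set) \<Rightarrow> nat \<Rightarrow> nat \<Rightarrow> 'n cmat set" where
  "induced_CL CL k 0 = {mat 1}"
| "induced_CL CL k (Suc j) = (if Suc j \<le> k then {mat 1}
     else {c ** d | c d. c \<in> CL (Suc j) \<and> d \<in> induced_CL CL k j})"

definition FR :: "'n::finite cmat set \<Rightarrow> 'n cvec \<Rightarrow> 'n cvec set" where
  "FR H x0 = {x. \<forall>h \<in> H - Stab H x0. norm (x - x0) < norm (h *v x - x0)}"

definition minimal_rep :: "'n::finite cmat set \<Rightarrow> 'n cvec \<Rightarrow> 'n cmat \<Rightarrow> bool" where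
  "minimal_rep H x0 c \<longleftrightarrow> x0 \<in> (\<lambda>x. c *v x) ` FR H x0"

text \<open>One step of the algorithm: the element of CL k minimizing the distance
  (ties broken by the fixed ranking rk k, which is injective on CL k).\<close>
definition dec_step :: "(nat \<Rightarrow> 'n::finite cmat set) \<Rightarrow> (nat \<Rightarrow> 'n cmat \<Rightarrow> nat) \<Rightarrow> 'n cvec
     \<Rightarrow> nat \<Rightarrow> 'n cvec \<Rightarrow> 'n cmat" where
  "dec_step CL rk x0 k r = (THE d. d \<in> CL k \<and> (\<forall>a \<in> CL k.
      norm (d *v r - x0) < norm (a *v r - x0) \<or>
      (norm (d *v r - x0) = norm (a *v r - x0) \<and> rk k d \<le> rk k a)))"

fun dec_iter :: "(nat \<Rightarrow> 'n::finite cmat set) \<Rightarrow> (nat \<Rightarrow> 'n cmat \<Rightarrow> nat) \<Rightarrow> 'n cvec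
     \<Rightarrow> nat \<Rightarrow> 'n cvec \<Rightarrow> 'n cvec \<times> 'n cmat" where
  "dec_iter CL rk x0 0 r = (r, mat 1)"
| "dec_iter CL rk x0 (Suc k) r = (let (r', g) = dec_iter CL rk x0 k r;
       d = dec_step CL rk x0 (Suc k) r' in (d *v r', d ** g))"

definition subgroup_decode :: "(nat \<Rightarrow> 'n::finite cmat set) \<Rightarrow> (nat \<Rightarrow> 'n cmat \<Rightarrow> nat) \<Rightarrow> 'n cvec
     \<Rightarrow> nat \<Rightarrow> 'n cvec \<Rightarrow> 'n cmat" where
  "subgroup_decode CL rk x0 m r = snd (dec_iter CL rk x0 m r)"

definition decodes_correctly_with_noise :: "'n::finite cmat set \<Rightarrow> (nat \<Rightarrow> 'n cmat set)
     \<Rightarrow> (nat \<Rightarrow> 'n cmat \<Rightarrow> nat) \<Rightarrow> 'n cvec \<Rightarrow> nat \<Rightarrow> bool" where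
  "decodes_correctly_with_noise G CL rk x0 m \<longleftrightarrow>
     (\<exists>\<delta>>0. \<forall>g\<in>G. \<forall>r. norm (r - matrix_inv g *v x0) < \<delta> \<longrightarrow>
        subgroup_decode CL rk x0 m r = g)"

end

theory Submission
  imports Defs
begin

fun Pc :: "(nat \<Rightarrow> 'n::finite cmat) \<Rightarrow> nat \<Rightarrow> nat \<Rightarrow> 'n cmat" where
  "Pc c k 0 = mat 1"
| "Pc c k (Suc j) = (if Suc j \<le> k then mat 1 else c (Suc j) ** Pc c k j)"

lemma Pc_induced: "(\<forall>i. k < i \<and> i \<le> j \<longrightarrow> c i \<in> CL i) \<Longrightarrow> Pc c k j \<in> induced_CL CL k j"
proof (induction j)
  case 0 then show ?case by simp
next
  case (Suc j)
  show ?case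
  proof (cases "Suc j \<le> k")
    case True then show ?thesis by simp
  next
    case False
    then have "c (Suc j) \<in> CL (Suc j)" using Suc.prems by simp
    moreover have "Pc c k j \<in> induced_CL CL k j" using Suc by simp
    ultimately show ?thesis using False by (simp only: Pc.simps induced_CL.simps if_False) blast
  qed
qed

lemma Pc_triv: "j \<le> k \<Longrightarrow> Pc c k j = mat 1"
  by (induction j) auto

lemma Pc_split: "k \<le> j \<Longrightarrow> Pc c 0 j = Pc c k j ** Pc c 0 k"
proof (induction j)
  case 0 then show ?case by simp
next
  case (Suc j)
  show ?case
  proof (cases "k = Suc j")
    case True then show ?thesis by simp
  next
    case False
    then have "k \<le> j" using Suc by simp
    then show ?thesis using Suc False by (simp add: matrix_mul_assoc)
  qed
qed

lemma Pc_cong: "(\<forall>i. i \<le> j \<longrightarrow> c i = c' i) \<Longrightarrow> Pc c k j = Pc c' k j"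
  by (induction j) auto

lemma Pc_in: "mat_group G \<Longrightarrow> (\<forall>i. k < i \<and> i \<le> j \<longrightarrow> c i \<in> G) \<Longrightarrow> Pc c k j \<in> G"
  by (induction j) (auto simp: mat_group_def)

lemma unitary_dist: "unitary_mat U \<Longrightarrow> norm (U *v x - U *v y) = norm (x - y)"
  by (metis unitary_mat_def matrix_vector_mult_diff_distrib)

theorem mainTheorem5:
  fixes G :: "'n::finite cmat set"
    and x0 :: "'n cvec"
    and Gs :: "nat \<Rightarrow> 'n cmat set"
    and CL :: "nat \<Rightarrow> 'n cmat set"
    and rk :: "nat \<Rightarrow> 'n cmat \<Rightarrow> nat"
    and m :: nat
  assumes "finite G" and "mat_group G" and "\<forall>g\<in>G. unitary_mat g"
    and "norm x0 = 1"
    and "card ((\<lambda>g. g *v x0) ` G) = card G"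
    and "Gs 0 = {mat 1}" and "Gs m = G"
    and "\<forall>k\<le>m. mat_subgroup (Gs k) G"
    and "\<forall>k. 1 \<le> k \<and> k \<le> m \<longrightarrow> Gs (k - 1) \<subset> Gs k"
    and "\<forall>k. 1 \<le> k \<and> k \<le> m \<longrightarrow> coset_leaders (CL k) (Gs k) (Gs (k - 1))"
    and "\<forall>k. 1 \<le> k \<and> k \<le> m \<longrightarrow> inj_on (rk k) (CL k)"
    and "\<forall>k. 1 \<le> k \<and> k < m \<longrightarrow> (\<forall>c \<in> induced_CL CL k m. minimal_rep (Gs k) x0 c)"
  shows "decodes_correctly_with_noise G CL rk x0 m"
proof -
  note fin = assms(1) and grp = assms(2) and uni = assms(3)
  have inj: "inj_on (\<lambda>g. g *v x0) G"
    using assms(5) fin by (simp add: inj_on_iff_eq_card)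
  have I_G: "mat 1 \<in> G" using grp by (simp add: mat_group_def)
  have mul_G: "\<And>u v. u \<in> G \<Longrightarrow> v \<in> G \<Longrightarrow> u ** v \<in> G" using grp by (simp add: mat_group_def)
  have inv_G: "\<And>u. u \<in> G \<Longrightarrow> \<exists>v\<in>G. v ** u = mat 1 \<and> u ** v = mat 1"
    using grp by (simp add: mat_group_def)
  have sub: "\<And>k. k \<le> m \<Longrightarrow> Gs k \<subseteq> G" using assms(8) by (simp add: mat_subgroup_def)
  have grpk: "\<And>k. k \<le> m \<Longrightarrow> mat_group (Gs k)" using assms(8) by (simp add: mat_subgroup_def)
  have CLk: "\<And>k. 1 \<le> k \<Longrightarrow> k \<le> m \<Longrightarrow> CL k \<subseteq> Gs k"
    using assms(10) by (simp add: coset_leaders_def)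
  have CLG: "\<And>k. 1 \<le> k \<Longrightarrow> k \<le> m \<Longrightarrow> CL k \<subseteq> G" using CLk sub by blast
  define nd where "nd u = norm (u *v x0 - x0)" for u :: "'n cmat"
  define S where "S = {nd u - nd v | u v. u \<in> G \<and> v \<in> G \<and> nd v < nd u}"
  have finS: "finite S"
  proof -
    have "S \<subseteq> (\<lambda>(u,v). nd u - nd v) ` (G \<times> G)" unfolding S_def by auto
    then show ?thesis using fin finite_subset by blast
  qed
  define \<delta> where "\<delta> = (if S = {} then 1 else Min S / 2)"
  have Spos: "\<And>s. s \<in> S \<Longrightarrow> s > 0" unfolding S_def by auto
  have dpos: "\<delta> > 0" using finS Spos by (auto simp: \<delta>_def)
  have dle: "\<And>s. s \<in> S \<Longrightarrow> 2 * \<delta> \<le> s" using finS by (auto simp: \<delta>_def)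
  have decomp: "\<And>j g. j \<le> m \<Longrightarrow> g \<in> Gs j \<Longrightarrow> \<exists>c. (\<forall>i. 1 \<le> i \<and> i \<le> j \<longrightarrow> c i \<in> CL i) \<and> g = Pc c 0 j"
  proof -
    fix j g
    show "j \<le> m \<Longrightarrow> g \<in> Gs j \<Longrightarrow> \<exists>c. (\<forall>i. 1 \<le> i \<and> i \<le> j \<longrightarrow> c i \<in> CL i) \<and> g = Pc c 0 j"
    proof (induction j arbitrary: g)
      case 0 then show ?case using assms(6) by auto
    next
      case (Suc j)
      then have "coset_leaders (CL (Suc j)) (Gs (Suc j)) (Gs j)" using assms(10) by force
      then obtain c' h where c': "c' \<in> CL (Suc j)" "h \<in> Gs j" "g = c' ** h"
        using Suc.prems unfolding coset_leaders_def by blast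
      obtain c where c: "\<forall>i. 1 \<le> i \<and> i \<le> j \<longrightarrow> c i \<in> CL i" "h = Pc c 0 j"
        using Suc c' by auto
      have "Pc (c(Suc j := c')) 0 j = Pc c 0 j" by (rule Pc_cong[symmetric]) auto
      then have "g = Pc (c(Suc j := c')) 0 (Suc j)" using c c' by simp
      moreover have "\<forall>i. 1 \<le> i \<and> i \<le> Suc j \<longrightarrow> (c(Suc j := c')) i \<in> CL i"
        using c c' le_Suc_eq by auto
      ultimately show ?case by blast
    qed
  qed
  show ?thesis unfolding decodes_correctly_with_noise_def
  proof (intro exI[of _ \<delta>] conjI ballI allI impI dpos)
    fix g r assume gG: "g \<in> G" and rn: "norm (r - matrix_inv g *v x0) < \<delta>"
    obtain c where c: "\<forall>i. 1 \<le> i \<and> i \<le> m \<longrightarrow> c i \<in> CL i" "g = Pc c 0 m"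
      using decomp[of m g] gG assms(7) by auto
    define ginv where "ginv = matrix_inv g"
    have ginv: "g ** ginv = mat 1"
    proof -
      obtain v where "g ** v = mat 1 \<and> v ** g = mat 1" using inv_G[OF gG] by blast
      then show ?thesis unfolding ginv_def matrix_inv_def by (rule someI2) auto
    qed
    have cG: "\<And>i. 1 \<le> i \<Longrightarrow> i \<le> m \<Longrightarrow> c i \<in> G" using c CLG by blast
    have PG: "\<And>k j. j \<le> m \<Longrightarrow> Pc c k j \<in> G"
      by (rule Pc_in[OF grp]) (auto intro: cG)
    have step: "dec_step CL rk x0 k (Pc c 0 (k - 1) *v r) = c k" if k: "1 \<le> k" "k \<le> m" for k
    proof -
      define r' where "r' = Pc c 0 (k - 1) *v r"
      define y where "y = Pc c 0 (k - 1) *v (ginv *v x0)"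
      have ry: "norm (r' - y) < \<delta>"
        using unitary_dist[of "Pc c 0 (k - 1)" r "ginv *v x0"] uni PG[of "k-1" 0] k rn
        by (simp add: r'_def y_def ginv_def)
      define e where "e = Pc c k m"
      have eG: "e \<in> G" using PG k e_def by simp
      obtain einv where einv: "einv \<in> G" "einv ** e = mat 1" "e ** einv = mat 1"
        using inv_G[OF eG] by blast
      have split: "g = e ** Pc c 0 k" using Pc_split[of k m c] c k e_def by simp
      have Pk: "Pc c 0 k = c k ** Pc c 0 (k - 1)"
        using k by (cases k) auto
      have "Pc c 0 k = einv ** g" using split einv by (simp add: matrix_mul_assoc)
      then have "Pc c 0 k ** ginv = einv" using ginv by (metis matrix_mul_assoc matrix_mul_rid)
      then have cy: "c k *v y = einv *v x0"
        by (simp add: y_def matrix_vector_mul_assoc Pk matrix_mul_assoc)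
      have minr: "minimal_rep (Gs k) x0 e"
      proof (cases "k = m")
        case True
        then have "e = mat 1" by (simp add: e_def Pc_triv)
        moreover have "x0 \<in> FR (Gs k) x0"
          unfolding FR_def Stab_def by auto
        ultimately show ?thesis unfolding minimal_rep_def by force
      next
        case False
        then show ?thesis using assms(12) k Pc_induced[of k m c CL] c e_def by auto
      qed
      then obtain x where x: "x \<in> FR (Gs k) x0" "e *v x = x0"
        unfolding minimal_rep_def by blast
      have xe: "x = einv *v x0" using x einv by (metis matrix_vector_mul_assoc matrix_vector_mul_lid)
      have ckG: "c k \<in> Gs k" using c CLk k by blast
      obtain cinv where cinv: "cinv \<in> Gs k" "cinv ** c k = mat 1" "c k ** cinv = mat 1"
        using grpk[OF k(2)] ckG unfolding mat_group_def by blast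
      have better: "norm (c k *v r' - x0) < norm (a *v r' - x0)" if a: "a \<in> CL k" "a \<noteq> c k" for a
      proof -
        have aG: "a \<in> Gs k" using a CLk k by blast
        define h where "h = a ** cinv"
        have hG: "h \<in> Gs k" using grpk[OF k(2)] aG cinv by (simp add: mat_group_def h_def)
        have hI: "h \<noteq> mat 1"
        proof
          assume "h = mat 1"
          then have "a = c k" using cinv unfolding h_def
            by (metis matrix_mul_assoc matrix_mul_lid matrix_mul_rid)
          then show False using a by simp
        qed
        have hx0: "h *v x0 \<noteq> x0"
        proof
          assume "h *v x0 = x0"
          then have "h *v x0 = mat 1 *v x0" by simp
          then have "h = mat 1" using inj hG sub k I_G by (meson inj_onD subsetD)
          then show False using hI by simp
        qed
        have ay: "a *v y = (h ** einv) *v x0"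
        proof -
          have "a = h ** c k" using cinv by (simp add: h_def matrix_mul_assoc[symmetric])
          then show ?thesis using cy by (simp add: matrix_vector_mul_assoc[symmetric])
        qed
        have lt: "nd einv < nd (h ** einv)"
          using x(1) hG hx0 xe unfolding FR_def Stab_def nd_def
          by (auto simp: matrix_vector_mul_assoc)
        have hG': "h ** einv \<in> G" using hG sub k einv mul_G by blast
        have gap: "2 * \<delta> \<le> nd (h ** einv) - nd einv"
          using dle lt hG' einv(1) unfolding S_def by blast
        have aU: "unitary_mat a" "unitary_mat (c k)" using uni aG ckG sub k by auto
        have e1: "norm (a *v r' - a *v y) < \<delta>" using unitary_dist[OF aU(1)] ry by simp
        have e2: "norm (c k *v r' - c k *v y) < \<delta>" using unitary_dist[OF aU(2)] ry by simp
        have t1: "norm (a *v y - x0) \<le> norm (a *v r' - x0) + norm (a *v r' - a *v y)"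
          using norm_triangle_ineq4[of "a *v r' - x0" "a *v r' - a *v y"] by simp
        have t2: "norm (c k *v r' - x0) \<le> norm (c k *v y - x0) + norm (c k *v r' - c k *v y)"
          using norm_triangle_ineq[of "c k *v y - x0" "c k *v r' - c k *v y"] by simp
        show ?thesis using t1 t2 e1 e2 gap ay cy unfolding nd_def by simp
      qed
      have P: "c k \<in> CL k \<and> (\<forall>a \<in> CL k. norm (c k *v r' - x0) < norm (a *v r' - x0) \<or>
          (norm (c k *v r' - x0) = norm (a *v r' - x0) \<and> rk k (c k) \<le> rk k a))"
        using better c k by auto
      have "dec_step CL rk x0 k r' = c k"
        unfolding dec_step_def
      proof (rule the_equality)
        show "c k \<in> CL k \<and> (\<forall>a \<in> CL k. norm (c k *v r' - x0) < norm (a *v r' - x0) \<or>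
          (norm (c k *v r' - x0) = norm (a *v r' - x0) \<and> rk k (c k) \<le> rk k a))" by (rule P)
      next
        fix d assume d: "d \<in> CL k \<and> (\<forall>a \<in> CL k. norm (d *v r' - x0) < norm (a *v r' - x0) \<or>
          (norm (d *v r' - x0) = norm (a *v r' - x0) \<and> rk k d \<le> rk k a))"
        show "d = c k"
        proof (rule ccontr)
          assume "d \<noteq> c k"
          then have "norm (c k *v r' - x0) < norm (d *v r' - x0)" using better d by blast
          moreover have "norm (d *v r' - x0) \<le> norm (c k *v r' - x0)" using d P by force
          ultimately show False by simp
        qed
      qed
      then show ?thesis by (simp add: r'_def)
    qed
    have iter: "k \<le> m \<Longrightarrow> dec_iter CL rk x0 k r = (Pc c 0 k *v r, Pc c 0 k)" for k
    proof (induction k)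
      case 0 then show ?case by simp
    next
      case (Suc k)
      then have "dec_step CL rk x0 (Suc k) (Pc c 0 k *v r) = c (Suc k)" using step[of "Suc k"] by simp
      then show ?case using Suc by (simp add: matrix_vector_mul_assoc Let_def)
    qed
    show "subgroup_decode CL rk x0 m r = g"
      unfolding subgroup_decode_def using iter[of m] c by simp
  qed
qed

end
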